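(* Let $H$ and $\Xi^*$ be either ($H_D$, $\Xi^+$), ($H_A$, $\Xi^+$), or ($H_{E_k}$, $\Xi$), with corresponding criterion $\phi\in\{\phi_D,\phi_A,\phi_{E_k}\}$. Let $\Xi'\subseteq\Xi^*$ be a finite nonempty set, and let $(\xi',t')$ be an optimal solution of the linear program: maximize $t$ over $\xi\in\Xi$, $t\in\mathbb{R}$, subject to $\sum_{x\in\mathcal{X}}H(\mu,x)\xi(x)\ge t$ for all $\mu\in\Xi'$. If $\xi'\in\Xi^*$, then $$\phi(\xi')\le \sup_{\xi\in\Xi^*}\phi(\xi)\le t'.$$
   Context: $\mathcal{X}$ finite, $f:\mathcal{X}\to\mathbb{R}^p$, $\Xi$ the probability measures on $\mathcal{X}$, $M(\xi)=\sum_x f(x)f^\top(x)\xi(x)$, $\Xi^+=\{\mu\in\Xi: M(\mu)\text{ nonsingular}\}$. $\phi_D(\xi)=\det^{1/p}M(\xi)$, $\phi_A(\xi)=1/\mathrm{tr}M^{-1}(\xi)$ (on $\Xi^+$), $\phi_{E_k}(\xi)$ = sum of the $k$ smallest eigenvalues of $M(\xi)$. $H_D(\mu,x)=\frac{\det^{1/p}[M(\mu)]}{p}f^\top(x)M^{-1}(\mu)f(x)$, $H_A(\mu,x)=\|M^{-1}(\mu)f(x)\|^2/[\mathrm{tr}M^{-1}(\mu)]^2$, $H_{E_k}(\mu,x)=\|P^{(k)}(\mu)f(x)\|^2$, where $P^{(k)}(\mu)=\sum_{i=1}^k u_iu_i^\top$ for an orthonormal eigenbasis $u_1,\dots,u_p$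 of $M(\mu)$ ordered by increasing eigenvalues. *)

theory Defs
  imports "HOL-Analysis.Analysis" "HOL-Computational_Algebra.Polynomial" "HOL-Library.Multiset"
begin

definition design :: "('x::finite \<Rightarrow> real) \<Rightarrow> bool" where
  "design \<xi> \<longleftrightarrow> (\<forall>x. \<xi> x \<ge> 0) \<and> (\<Sum>x\<in>UNIV. \<xi> x) = 1"

definition Designs :: "('x::finite \<Rightarrow> real) set" where
  "Designs = {\<xi>. design \<xi>}"

definition outer :: "real^'p \<Rightarrow> real^'p \<Rightarrow> real^'p^'p" where
  "outer u v = (\<chi> i j. u $ i * v $ j)"

definition Minf :: "('x::finite \<Rightarrow> real^'p) \<Rightarrow> ('x \<Rightarrow> real) \<Rightarrow> real^'p^'p" where
  "Minf f \<xi> = (\<Sum>x\<in>UNIV. \<xi> x *\<^sub>R outer (f x) (f x))"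

definition DesignsPlus :: "('x::finite \<Rightarrow> real^'p) \<Rightarrow> ('x \<Rightarrow> real) set" where
  "DesignsPlus f = {\<xi>. design \<xi> \<and> invertible (Minf f \<xi>)}"

definition charpoly :: "real^'p^'p \<Rightarrow> real poly" where
  "charpoly A = det (\<chi> i j. (if i = j then [:0, 1:] else 0) - [:A $ i $ j:])"

definition eigenvalues_sorted :: "real^'p^'p \<Rightarrow> real list" where
  "eigenvalues_sorted A = sorted_list_of_multiset (proots (charpoly A))"

definition phiD :: "('x::finite \<Rightarrow> real^'p::finite) \<Rightarrow> ('x \<Rightarrow> real) \<Rightarrow> real" where
  "phiD f \<xi> = det (Minf f \<xi>) powr (1 / real CARD('p))"

definition phiA :: "('x::finite \<Rightarrow> real^'p) \<Rightarrow> ('x \<Rightarrow> real) \<Rightarrow> real" where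
  "phiA f \<xi> = 1 / trace (matrix_inv (Minf f \<xi>))"

definition phiE :: "('x::finite \<Rightarrow> real^'p) \<Rightarrow> nat \<Rightarrow> ('x \<Rightarrow> real) \<Rightarrow> real" where
  "phiE f k \<xi> = sum_list (take k (eigenvalues_sorted (Minf f \<xi>)))"

definition HD :: "('x::finite \<Rightarrow> real^'p::finite) \<Rightarrow> ('x \<Rightarrow> real) \<Rightarrow> 'x \<Rightarrow> real" where
  "HD f \<mu> x = det (Minf f \<mu>) powr (1 / real CARD('p)) / real CARD('p)
      * (f x \<bullet> (matrix_inv (Minf f \<mu>) *v f x))"

definition HA :: "('x::finite \<Rightarrow> real^'p) \<Rightarrow> ('x \<Rightarrow> real) \<Rightarrow> 'x \<Rightarrow> real" where
  "HA f \<mu> x = (norm (matrix_inv (Minf f \<mu>) *v f x))\<^sup>2 / (trace (matrix_inv (Minf f \<mu>)))\<^sup>2"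

definition ordered_eigenbasis :: "real^'p::finite^'p \<Rightarrow> (nat \<Rightarrow> real^'p) \<Rightarrow> bool" where
  "ordered_eigenbasis A u \<longleftrightarrow>
     (\<forall>i<CARD('p). \<forall>j<CARD('p). u i \<bullet> u j = (if i = j then 1 else 0)) \<and>
     (\<exists>lam::nat \<Rightarrow> real. (\<forall>i<CARD('p). A *v u i = lam i *\<^sub>R u i) \<and>
        (\<forall>i j. i \<le> j \<longrightarrow> j < CARD('p) \<longrightarrow> lam i \<le> lam j))"

definition Pk :: "(nat \<Rightarrow> real^'p) \<Rightarrow> nat \<Rightarrow> real^'p^'p" where
  "Pk u k = (\<Sum>i<k. outer (u i) (u i))"

text \<open>H_{E_k}(mu,x) = ||P^(k)(mu) f(x)||^2, where u is the chosen eigenbasis of M(mu).\<close>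
definition HE :: "('x \<Rightarrow> real^'p) \<Rightarrow> (nat \<Rightarrow> real^'p) \<Rightarrow> nat \<Rightarrow> 'x \<Rightarrow> real" where
  "HE f u k x = (norm (Pk u k *v f x))\<^sup>2"

definition lp_feasible :: "(('x::finite \<Rightarrow> real) \<Rightarrow> 'x \<Rightarrow> real) \<Rightarrow> ('x \<Rightarrow> real) set
    \<Rightarrow> ('x \<Rightarrow> real) \<Rightarrow> real \<Rightarrow> bool" where
  "lp_feasible H Xi' \<xi> t \<longleftrightarrow> design \<xi> \<and> (\<forall>\<mu>\<in>Xi'. (\<Sum>x\<in>UNIV. H \<mu> x * \<xi> x) \<ge> t)"

definition lp_optimal :: "(('x::finite \<Rightarrow> real) \<Rightarrow> 'x \<Rightarrow> real) \<Rightarrow> ('x \<Rightarrow> real) set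
    \<Rightarrow> ('x \<Rightarrow> real) \<Rightarrow> real \<Rightarrow> bool" where
  "lp_optimal H Xi' \<xi> t \<longleftrightarrow> lp_feasible H Xi' \<xi> t \<and> (\<forall>\<eta> s. lp_feasible H Xi' \<eta> s \<longrightarrow> s \<le> t)"

end

theory Submission
  imports Defs "HOL-Combinatorics.List_Permutation"
begin


lemma inner_mv: "((A::real^'n^'m) *v x) \<bullet> y = x \<bullet> (transpose A *v y)"
  unfolding inner_vec_def matrix_vector_mult_def transpose_def
  apply (simp add: sum_distrib_left sum_distrib_right)
  apply (subst sum.swap) apply (simp add: mult_ac)
  done

lemma sym_inner: "transpose A = A \<Longrightarrow> ((A::real^'n^'n) *v x) \<bullet> y = x \<bullet> (A *v y)"
  by (metis inner_mv)

lemma Minf_mv: "Minf f \<xi> *v y = (\<Sum>x\<in>UNIV. (\<xi> x * (f x \<bullet> y)) *\<^sub>R f x)"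
  unfolding Minf_def outer_def
  apply (simp add: vec_eq_iff matrix_vector_mult_def inner_vec_def sum_component
      sum_distrib_left sum_distrib_right)
  apply (intro allI, subst sum.swap) apply (simp add: mult_ac)
  done

lemma Minf_sym: "transpose (Minf f \<xi>) = Minf f \<xi>"
  unfolding Minf_def outer_def
  by (simp add: vec_eq_iff transpose_def sum_component mult_ac)

lemma Minf_quad: "y \<bullet> (Minf f \<xi> *v y) = (\<Sum>x\<in>UNIV. \<xi> x * (f x \<bullet> y)^2)"
  unfolding Minf_mv by (simp add: inner_sum_right power2_eq_square inner_commute mult_ac)

lemma Minf_pd:
  assumes "design \<xi>" "invertible (Minf f \<xi>)" "y \<noteq> 0"
  shows "y \<bullet> (Minf f \<xi> *v y) > 0"
proof -
  have nn: "\<And>x. \<xi> x * (f x \<bullet> y)^2 \<ge> 0" using assms(1) unfolding design_def by simp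
  show ?thesis
  proof (rule ccontr)
    assume "\<not> ?thesis"
    then have "(\<Sum>x\<in>UNIV. \<xi> x * (f x \<bullet> y)^2) = 0" using nn Minf_quad[of y f \<xi>]
      by (metis (no_types, lifting) linorder_not_less order_antisym_conv sum_nonneg)
    then have "\<And>x. \<xi> x * (f x \<bullet> y)^2 = 0" using nn by (simp add: sum_nonneg_eq_0_iff)
    then have h: "\<And>x. \<xi> x * (f x \<bullet> y) = 0" by (simp add: power2_eq_square)
    have "Minf f \<xi> *v y = (\<Sum>x\<in>UNIV. 0 *\<^sub>R f x)" by (simp only: Minf_mv h)
    then have "Minf f \<xi> *v y = 0" by simp
    then show False using assms(2,3)
      by (metis invertible_def matrix_vector_mul_assoc matrix_vector_mul_lid matrix_vector_mult_0_right)
  qed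
qed



definition onb :: "('n::finite \<Rightarrow> real^'n) \<Rightarrow> bool" where
  "onb v \<longleftrightarrow> (\<forall>i j. v i \<bullet> v j = (if i = j then 1 else 0))"

lemma onb_expand:
  fixes v :: "'n::finite \<Rightarrow> real^'n"
  assumes "onb v" shows "y = (\<Sum>i\<in>UNIV. (v i \<bullet> y) *\<^sub>R v i)"
proof -
  define V :: "real^'n^'n" where "V = (\<chi> i. v i)"
  have "V ** transpose V = mat 1"
    using assms unfolding onb_def
    by (simp add: vec_eq_iff V_def matrix_matrix_mult_def transpose_def mat_def inner_vec_def)
  then have "transpose V ** V = mat 1" by (rule matrix_left_right_inverse1)
  then have e: "\<And>a b. (\<Sum>i\<in>UNIV. v i $ a * v i $ b) = (if a = b then 1 else 0)"
    by (simp add: vec_eq_iff V_def matrix_matrix_mult_def transpose_def mat_def)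
  have "y $ a = (\<Sum>i\<in>UNIV. (v i \<bullet> y) *\<^sub>R v i) $ a" for a
  proof -
    have "(\<Sum>i\<in>UNIV. (v i \<bullet> y) *\<^sub>R v i) $ a = (\<Sum>i\<in>UNIV. (\<Sum>b\<in>UNIV. v i $ b * y $ b) * v i $ a)"
      by (simp add: sum_component inner_vec_def)
    also have "\<dots> = (\<Sum>b\<in>UNIV. y $ b * (\<Sum>i\<in>UNIV. v i $ a * v i $ b))"
      apply (simp add: sum_distrib_right) apply (subst sum.swap) by (simp add: sum_distrib_left mult_ac)
    also have "\<dots> = y $ a" by (simp add: e if_distrib[of "\<lambda>t. _ * t"] cong: if_cong)
    finally show ?thesis by simp
  qed
  then show ?thesis by (simp add: vec_eq_iff)
qed

lemma onb_inner:
  fixes v :: "'n::finite \<Rightarrow> real^'n"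
  assumes "onb v" shows "x \<bullet> y = (\<Sum>i\<in>UNIV. (v i \<bullet> x) * (v i \<bullet> y))"
proof -
  have "x \<bullet> y = (\<Sum>i\<in>UNIV. (v i \<bullet> x) *\<^sub>R v i) \<bullet> y" using onb_expand[OF assms, of x] by simp
  also have "\<dots> = (\<Sum>i\<in>UNIV. (v i \<bullet> x) * (v i \<bullet> y))" by (simp add: inner_sum_left)
  finally show ?thesis .
qed

lemma onb_norm2:
  fixes v :: "'n::finite \<Rightarrow> real^'n"
  assumes "onb v" shows "(norm y)^2 = (\<Sum>i\<in>UNIV. (v i \<bullet> y)^2)"
  using onb_inner[OF assms, of y y] by (simp add: power2_norm_eq_inner[symmetric] power2_eq_square)

lemma cont_quad: "continuous_on K (\<lambda>x. x \<bullet> ((A::real^'n^'n) *v x))"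
  by (intro continuous_on_inner continuous_on_id matrix_vector_mult_linear_continuous_on)

lemma quad_expand:
  fixes A :: "real^'n^'n"
  assumes sym: "transpose A = A"
  shows "(v + t *\<^sub>R w) \<bullet> (A *v (v + t *\<^sub>R w)) =
     v \<bullet> (A *v v) + 2 * t * (v \<bullet> (A *v w)) + t^2 * (w \<bullet> (A *v w))"
proof -
  have "w \<bullet> (A *v v) = v \<bullet> (A *v w)"
    using sym_inner[OF sym, of w v] by (simp add: inner_commute)
  then show ?thesis
    by (simp add: matrix_vector_right_distrib matrix_vector_mult_scaleR inner_add_left
        inner_add_right power2_eq_square algebra_simps)
qed

lemma quad_min_ortho:
  fixes c d :: real
  assumes "\<And>t. 2 * t * c + t^2 * d \<ge> 0"
  shows "c = 0"
proof (rule ccontr)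
  assume "c \<noteq> 0"
  define D where "D = \<bar>d\<bar> + 1"
  define t where "t = - c / D"
  have pos: "D > 0" unfolding D_def by simp
  have "2 * t * c + t^2 * d = (c^2 / D^2) * (d - 2 * D)"
    unfolding t_def using pos by (simp add: field_simps power2_eq_square)
  also have "\<dots> < 0"
  proof (rule mult_pos_neg)
    show "c^2 / D^2 > 0" using \<open>c \<noteq> 0\<close> pos by simp
    show "d - 2 * D < 0" unfolding D_def by (cases "d \<ge> 0") auto
  qed
  finally show False using assms[of t] by linarith
qed

lemma spectral_aux:
  fixes A :: "real^'n^'n"
  assumes sym: "transpose A = A"
  shows "subspace S \<Longrightarrow> (\<forall>x\<in>S. A *v x \<in> S) \<Longrightarrow>
    \<exists>B. B \<subseteq> S \<and> pairwise orthogonal B \<and> (\<forall>x\<in>B. norm x = 1) \<and>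
        (\<forall>x\<in>B. A *v x = (x \<bullet> (A *v x)) *\<^sub>R x) \<and> S \<subseteq> span B"
proof (induction "dim S" arbitrary: S rule: less_induct)
  case less
  show ?case
  proof (cases "S \<subseteq> {0}")
    case True
    then show ?thesis by (intro exI[of _ "{}"]) auto
  next
    case False
    then obtain z where z: "z \<in> S" "z \<noteq> 0" by auto
    define K where "K = S \<inter> sphere 0 1"
    have "compact K" unfolding K_def
      by (intro closed_Int_compact closed_subspace less.prems compact_sphere)
    moreover have "z /\<^sub>R norm z \<in> K" unfolding K_def using z less.prems(1)
      by (simp add: subspace_scale)
    then have "K \<noteq> {}" by auto
    ultimately obtain v where vK: "v \<in> K" and vmin: "\<forall>y\<in>K. v \<bullet> (A *v v) \<le> y \<bullet> (A *v y)"
      using continuous_attains_inf[OF _ _ cont_quad] by blast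
    have vS: "v \<in> S" and vn: "norm v = 1" using vK unfolding K_def by auto
    have vv: "v \<bullet> v = 1" using vn by (simp add: norm_eq_1)
    define l where "l = v \<bullet> (A *v v)"
    have ortho: "v \<bullet> (A *v w) = 0" if wS: "w \<in> S" and vw: "v \<bullet> w = 0" for w
    proof (rule quad_min_ortho[where d = "w \<bullet> (A *v w) - l * (w \<bullet> w)"])
      fix t :: real
      define u where "u = v + t *\<^sub>R w"
      have uS: "u \<in> S" unfolding u_def using vS wS less.prems(1)
        by (simp add: subspace_add subspace_scale)
      have uu: "u \<bullet> u = 1 + t^2 * (w \<bullet> w)"
        unfolding u_def using vv vw
        by (simp add: inner_add_left inner_add_right inner_commute power2_eq_square)
      then have upos: "u \<bullet> u > 0"
        by (metis add_pos_nonneg inner_ge_zero mult_nonneg_nonneg zero_le_power2 zero_less_one)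
      have "norm u > 0" using upos by (metis inner_zero_left less_irrefl zero_less_norm_iff)
      then have "u /\<^sub>R norm u \<in> K" unfolding K_def using uS less.prems(1)
        by (simp add: subspace_scale)
      then have "l \<le> (u /\<^sub>R norm u) \<bullet> (A *v (u /\<^sub>R norm u))"
        using vmin l_def by blast
      also have "\<dots> = (u \<bullet> (A *v u)) / (u \<bullet> u)"
        by (simp add: matrix_vector_mult_scaleR power2_eq_square power2_norm_eq_inner[symmetric] divide_inverse)
      finally have "l * (u \<bullet> u) \<le> u \<bullet> (A *v u)" using upos by (simp add: pos_le_divide_eq)
      moreover have "u \<bullet> (A *v u) = l + 2 * t * (v \<bullet> (A *v w)) + t^2 * (w \<bullet> (A *v w))"
        unfolding u_def l_def by (rule quad_expand[OF sym])
      ultimately show "2 * t * (v \<bullet> (A *v w)) + t^2 * (w \<bullet> (A *v w) - l * (w \<bullet> w)) \<ge> 0"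
        using uu by (simp add: algebra_simps)
    qed
    have eig: "A *v v = l *\<^sub>R v"
    proof -
      define r where "r = A *v v - l *\<^sub>R v"
      have rS: "r \<in> S" unfolding r_def using less.prems vS
        by (simp add: subspace_diff subspace_scale)
      have "r \<bullet> w = 0" if wS: "w \<in> S" for w
      proof -
        define w' where "w' = w - (v \<bullet> w) *\<^sub>R v"
        have w'S: "w' \<in> S" unfolding w'_def using wS vS less.prems(1)
          by (simp add: subspace_diff subspace_scale)
        have "v \<bullet> w' = 0" unfolding w'_def using vv by (simp add: inner_diff_right)
        then have o: "v \<bullet> (A *v w') = 0" using ortho w'S by blast
        have w: "w = w' + (v \<bullet> w) *\<^sub>R v" unfolding w'_def by simp
        have "(A *v v) \<bullet> w = v \<bullet> (A *v w)" by (rule sym_inner[OF sym])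
        also have "\<dots> = (v \<bullet> w) * l"
          by (subst w, simp add: matrix_vector_right_distrib matrix_vector_mult_scaleR
              inner_add_right o l_def)
        finally show ?thesis unfolding r_def by (simp add: inner_diff_left)
      qed
      from this[OF rS] have "r = 0" by simp
      then show ?thesis unfolding r_def by simp
    qed
    define S' where "S' = {w \<in> S. v \<bullet> w = 0}"
    have subS': "subspace S'" unfolding S'_def using less.prems(1)
      by (auto simp: subspace_def inner_add_right)
    have invS': "\<forall>x\<in>S'. A *v x \<in> S'" unfolding S'_def using less.prems(2) ortho by blast
    have "v \<notin> S'" unfolding S'_def using vv by auto
    moreover have "S' \<subseteq> S" unfolding S'_def by auto
    ultimately have "S' \<subset> S" using vS by blast
    then have "span S' \<subset> span S" using subS' less.prems(1) by (metis span_eq_iff)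
    then have "dim S' < dim S" by (rule dim_psubset)
    from less.hyps[OF this subS' invS'] obtain B' where B':
      "B' \<subseteq> S'" "pairwise orthogonal B'" "\<forall>x\<in>B'. norm x = 1"
      "\<forall>x\<in>B'. A *v x = (x \<bullet> (A *v x)) *\<^sub>R x" "S' \<subseteq> span B'" by blast
    show ?thesis
    proof (intro exI[of _ "insert v B'"] conjI)
      show "insert v B' \<subseteq> S" using B'(1) vS unfolding S'_def by auto
      show "pairwise orthogonal (insert v B')" using B'(1,2) unfolding S'_def
        by (auto simp: pairwise_insert orthogonal_def inner_commute)
      show "\<forall>x\<in>insert v B'. norm x = 1" using B'(3) vn by auto
      show "\<forall>x\<in>insert v B'. A *v x = (x \<bullet> (A *v x)) *\<^sub>R x" using B'(4) eig l_def by auto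
      show "S \<subseteq> span (insert v B')"
      proof
        fix w assume wS: "w \<in> S"
        define w' where "w' = w - (v \<bullet> w) *\<^sub>R v"
        have "w' \<in> S'" unfolding S'_def w'_def using wS vS less.prems(1) vv
          by (simp add: subspace_diff subspace_scale inner_diff_right)
        then have "w' \<in> span (insert v B')" using B'(5) span_mono[of B' "insert v B'"] by blast
        moreover have "(v \<bullet> w) *\<^sub>R v \<in> span (insert v B')" by (simp add: span_base span_mul)
        ultimately have "w' + (v \<bullet> w) *\<^sub>R v \<in> span (insert v B')" by (rule span_add)
        then show "w \<in> span (insert v B')" unfolding w'_def by simp
      qed
    qed
  qed
qed

lemma spectral:
  fixes A :: "real^'n^'n"
  assumes sym: "transpose A = A"
  shows "\<exists>v. onb v \<and> (\<forall>i. A *v v i = (v i \<bullet> (A *v v i)) *\<^sub>R v i)"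
proof -
  obtain B where B: "pairwise orthogonal B" "\<forall>x\<in>B. norm x = 1"
    "\<forall>x\<in>B. A *v x = (x \<bullet> (A *v x)) *\<^sub>R x" "UNIV \<subseteq> span B"
    using spectral_aux[OF sym, of UNIV] by auto
  have "0 \<notin> B" using B(2) by force
  then have ind: "independent B" using B(1) pairwise_orthogonal_independent by blast
  then have fin: "finite B" using independent_bound by blast
  have "card B = dim (span B)" using dim_span_eq_card_independent[OF ind] by simp
  also have "\<dots> = CARD('n)"
  proof -
    have "span B = UNIV" using B(4) by auto
    then show ?thesis by (simp add: dim_UNIV)
  qed
  finally have "card (UNIV::'n set) = card B" by simp
  then obtain h where h: "bij_betw h (UNIV::'n set) B"
    using finite_same_card_bij[of "UNIV::'n set" B] fin by auto
  have "onb h" unfolding onb_def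
  proof (intro allI)
    fix i j
    show "h i \<bullet> h j = (if i = j then 1 else 0)"
    proof (cases "i = j")
      case True
      then show ?thesis using B(2) h by (auto simp: bij_betw_def norm_eq_1)
    next
      case False
      then have "h i \<noteq> h j" using h by (auto simp: bij_betw_def inj_on_def)
      moreover have "h i \<in> B" "h j \<in> B" using h by (auto simp: bij_betw_def)
      ultimately show ?thesis using B(1) False by (auto simp: pairwise_def orthogonal_def)
    qed
  qed
  moreover have "\<forall>i. A *v h i = (h i \<bullet> (A *v h i)) *\<^sub>R h i"
    using B(3) h by (auto simp: bij_betw_def)
  ultimately show ?thesis by blast
qed



lemma mv_sum: "(M::real^'n^'m) *v (\<Sum>i\<in>I. c i *\<^sub>R w i) = (\<Sum>i\<in>I. c i *\<^sub>R (M *v w i))"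
  using linear_sum[OF matrix_vector_mul_linear, of M "\<lambda>i. c i *\<^sub>R w i" I]
  by (simp add: matrix_vector_mult_scaleR)

lemma onb_mv:
  fixes v :: "'n::finite \<Rightarrow> real^'n"
  assumes "onb v" shows "(M::real^'n^'m) *v y = (\<Sum>i\<in>UNIV. (v i \<bullet> y) *\<^sub>R (M *v v i))"
  by (subst onb_expand[OF assms, of y]) (simp add: mv_sum)

lemma onb_e:
  fixes v :: "'n::finite \<Rightarrow> real^'n"
  assumes "onb v" shows "(\<Sum>i\<in>UNIV. v i $ a * v i $ b) = (if a = b then 1 else 0)"
proof -
  have "axis b 1 = (\<Sum>i\<in>UNIV. (v i \<bullet> axis b 1) *\<^sub>R v i)" by (rule onb_expand[OF assms])
  then have "axis b 1 $ a = (\<Sum>i\<in>UNIV. (v i \<bullet> axis b 1) *\<^sub>R v i) $ a" by simp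
  moreover have "axis b 1 $ a = (if a = b then 1 else (0::real))" by (simp add: axis_def)
  ultimately show ?thesis by (simp add: inner_axis sum_component mult.commute)
qed

lemma triple_swap: "(\<Sum>i\<in>I. \<Sum>a\<in>A. \<Sum>b\<in>B. F i a b) = (\<Sum>a\<in>A. \<Sum>b\<in>B. \<Sum>i\<in>I. F i a b)"
proof -
  have "(\<Sum>i\<in>I. \<Sum>a\<in>A. \<Sum>b\<in>B. F i a b) = (\<Sum>a\<in>A. \<Sum>i\<in>I. \<Sum>b\<in>B. F i a b)" by (rule sum.swap)
  also have "\<dots> = (\<Sum>a\<in>A. \<Sum>b\<in>B. \<Sum>i\<in>I. F i a b)" by (rule sum.cong[OF refl], rule sum.swap)
  finally show ?thesis .
qed

lemma onb_trace:
  fixes v :: "'n::finite \<Rightarrow> real^'n"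
  assumes "onb v" shows "trace M = (\<Sum>i\<in>UNIV. v i \<bullet> (M *v v i))"
proof -
  have "(\<Sum>i\<in>UNIV. v i \<bullet> (M *v v i)) = (\<Sum>i\<in>UNIV. \<Sum>a\<in>UNIV. \<Sum>b\<in>UNIV. M $ a $ b * (v i $ a * v i $ b))"
    by (simp add: inner_vec_def matrix_vector_mult_def sum_distrib_left mult_ac)
  also have "\<dots> = (\<Sum>a\<in>UNIV. \<Sum>b\<in>UNIV. M $ a $ b * (\<Sum>i\<in>UNIV. v i $ a * v i $ b))"
    by (subst triple_swap) (simp add: sum_distrib_left)
  also have "\<dots> = trace M" by (simp add: onb_e[OF assms] trace_def if_distrib[of "\<lambda>t. _ * t"] cong: if_cong)
  finally show ?thesis by simp
qed

lemma onb_det: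
  fixes v :: "'n::finite \<Rightarrow> real^'n"
  assumes "onb v" and eig: "\<And>i. M *v v i = m i *\<^sub>R v i"
  shows "det M = (\<Prod>i\<in>UNIV. m i)"
proof -
  define V :: "real^'n^'n" where "V = (\<chi> i. v i)"
  have VV: "V ** transpose V = mat 1"
    using assms unfolding onb_def
    by (simp add: vec_eq_iff V_def matrix_matrix_mult_def transpose_def mat_def inner_vec_def)
  have ent: "(V ** M ** transpose V) $ i $ j = v i \<bullet> (M *v v j)" for i j
    by (simp add: V_def matrix_matrix_mult_def transpose_def inner_vec_def matrix_vector_mult_def
        sum_distrib_left sum_distrib_right mult_ac)
      (rule sum.swap)
  have "det (V ** M ** transpose V) = (\<Prod>i\<in>UNIV. (V ** M ** transpose V) $ i $ i)"
    by (rule det_diagonal) (use assms(1) in \<open>simp add: ent eig onb_def\<close>)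
  also have "\<dots> = (\<Prod>i\<in>UNIV. m i)" using assms(1) by (simp add: ent eig onb_def)
  finally have "det V * det M * det (transpose V) = (\<Prod>i\<in>UNIV. m i)" by (simp add: det_mul)
  moreover have "det V * det (transpose V) = 1" using VV by (metis det_I det_mul)
  ultimately show ?thesis by (simp add: algebra_simps)
qed

lemma poly_det: "poly (det (M :: real poly^'n^'n)) x = det (\<chi> i j. poly (M $ i $ j) x)"
  unfolding det_def by (simp add: poly_sum poly_prod)

lemma onb_charpoly:
  fixes v :: "'n::finite \<Rightarrow> real^'n"
  assumes "onb v" and eig: "\<And>i. A *v v i = m i *\<^sub>R v i"
  shows "charpoly A = (\<Prod>i\<in>UNIV. [:- m i, 1:])"
proof -
  have "poly (charpoly A) x = poly (\<Prod>i\<in>UNIV. [:- m i, 1:]) x" for x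
  proof -
    define B where "B = x *\<^sub>R mat 1 - A"
    have "(\<chi> i j. poly ((if i = j then [:0, 1:] else 0) - [:A $ i $ j:]) x) = B"
      by (simp add: B_def vec_eq_iff mat_def)
    then have "poly (charpoly A) x = det B" unfolding charpoly_def by (simp add: poly_det)
    also have "\<dots> = (\<Prod>i\<in>UNIV. x - m i)"
      by (rule onb_det[OF assms(1)]) (simp add: B_def matrix_vector_mult_diff_rdistrib eig
          matrix_vector_mult_scaleR algebra_simps scaleR_matrix_vector_assoc[symmetric])
    finally show ?thesis by (simp add: poly_prod)
  qed
  then show ?thesis using poly_eq_poly_eq_iff by blast
qed



lemma eig_decomp:
  fixes A :: "real^'n^'n"
  assumes "transpose A = A"
  obtains v l where "onb v" "\<And>i. A *v v i = l i *\<^sub>R v i"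
proof -
  obtain v where "onb v" "\<forall>i. A *v v i = (v i \<bullet> (A *v v i)) *\<^sub>R v i"
    using spectral[OF assms] by blast
  then show ?thesis using that[of v "\<lambda>i. v i \<bullet> (A *v v i)"] by blast
qed

lemma onb_quad:
  fixes v :: "'n::finite \<Rightarrow> real^'n"
  assumes "onb v" "\<And>i. A *v v i = l i *\<^sub>R v i"
  shows "y \<bullet> (A *v y) = (\<Sum>i\<in>UNIV. l i * (v i \<bullet> y)^2)"
  by (subst onb_mv[OF assms(1)]) (simp add: assms(2) inner_sum_right power2_eq_square inner_commute mult_ac)

lemma orth_combo:
  fixes u :: "nat \<Rightarrow> real^'n"
  assumes "\<forall>i<k. \<forall>j<k. u i \<bullet> u j = (if i = j then 1 else 0)" "j < k"
  shows "(\<Sum>i<k. c i *\<^sub>R u i) \<bullet> u j = c j"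
proof -
  have "(\<Sum>i<k. c i *\<^sub>R u i) \<bullet> u j = (\<Sum>i<k. c i * (if i = j then 1 else 0))"
    using assms by (simp add: inner_sum_left)
  also have "\<dots> = c j" using assms(2) by (simp add: if_distrib[of "\<lambda>t. _ * t"] cong: if_cong)
  finally show ?thesis .
qed

lemma orth_combo2:
  fixes u :: "nat \<Rightarrow> real^'n"
  assumes "\<forall>i<k. \<forall>j<k. u i \<bullet> u j = (if i = j then 1 else 0)"
  shows "(\<Sum>i<k. c i *\<^sub>R u i) \<bullet> (\<Sum>i<k. c i *\<^sub>R u i) = (\<Sum>i<k. (c i)^2)"
  by (simp add: inner_sum_right orth_combo[OF assms] power2_eq_square)

lemma bessel:
  fixes u :: "nat \<Rightarrow> real^'n"
  assumes "\<forall>i<k. \<forall>j<k. u i \<bullet> u j = (if i = j then 1 else 0)"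
  shows "(\<Sum>i<k. (u i \<bullet> y)^2) \<le> y \<bullet> y"
proof -
  define s where "s = (\<Sum>i<k. (u i \<bullet> y) *\<^sub>R u i)"
  have ss: "s \<bullet> s = (\<Sum>i<k. (u i \<bullet> y)^2)" unfolding s_def by (rule orth_combo2[OF assms])
  have ys: "y \<bullet> s = (\<Sum>i<k. (u i \<bullet> y)^2)" unfolding s_def
    by (simp add: inner_sum_right power2_eq_square inner_commute)
  have "0 \<le> (y - s) \<bullet> (y - s)" by simp
  also have "\<dots> = y \<bullet> y - 2 * (y \<bullet> s) + s \<bullet> s"
    by (simp add: inner_diff_left inner_diff_right inner_commute)
  finally show ?thesis using ss ys by simp
qed

lemma Pk_mv: "Pk u k *v y = (\<Sum>i<k. (u i \<bullet> y) *\<^sub>R u i)"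
  unfolding Pk_def outer_def
  apply (simp add: vec_eq_iff matrix_vector_mult_def inner_vec_def sum_component
      sum_distrib_left sum_distrib_right)
  apply (intro allI, subst sum.swap) apply (simp add: mult_ac)
  done

lemma HE_sum:
  assumes "\<forall>i<k. \<forall>j<k. u i \<bullet> u j = (if i = j then 1 else 0)"
  shows "(\<Sum>x\<in>UNIV. HE f u k x * \<xi> x) = (\<Sum>i<k. u i \<bullet> (Minf f \<xi> *v u i))"
proof -
  have "(\<Sum>x\<in>UNIV. HE f u k x * \<xi> x) = (\<Sum>x\<in>UNIV. \<Sum>i<k. \<xi> x * (f x \<bullet> u i)^2)"
    unfolding HE_def Pk_mv power2_norm_eq_inner orth_combo2[OF assms]
    by (simp add: sum_distrib_left inner_commute mult_ac)
  also have "\<dots> = (\<Sum>i<k. \<Sum>x\<in>UNIV. \<xi> x * (f x \<bullet> u i)^2)" by (rule sum.swap)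
  also have "\<dots> = (\<Sum>i<k. u i \<bullet> (Minf f \<xi> *v u i))" by (simp add: Minf_quad)
  finally show ?thesis .
qed

lemma kyfan_core:
  fixes \<beta> c :: "nat \<Rightarrow> real"
  assumes sorted: "\<And>i j. i \<le> j \<Longrightarrow> j < p \<Longrightarrow> \<beta> i \<le> \<beta> j"
    and c0: "\<And>j. j < p \<Longrightarrow> 0 \<le> c j" and c1: "\<And>j. j < p \<Longrightarrow> c j \<le> 1"
    and csum: "(\<Sum>j<p. c j) = real k" and k: "1 \<le> k" "k \<le> p"
  shows "(\<Sum>j<k. \<beta> j) \<le> (\<Sum>j<p. \<beta> j * c j)"
proof -
  define m where "m = \<beta> (k - 1)"
  have split: "{..<p} = {..<k} \<union> {k..<p}" using k by auto
  have disj: "{..<k} \<inter> {k..<p} = {}" by auto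
  have "(\<Sum>j<p. \<beta> j * c j) - (\<Sum>j<k. \<beta> j) =
        (\<Sum>j<k. \<beta> j * (c j - 1)) + (\<Sum>j\<in>{k..<p}. \<beta> j * c j)"
    unfolding split by (simp add: sum.union_disjoint disj algebra_simps sum_subtractf)
  also have "\<dots> \<ge> (\<Sum>j<k. m * (c j - 1)) + (\<Sum>j\<in>{k..<p}. m * c j)"
  proof (rule add_mono; rule sum_mono)
    fix j assume "j \<in> {..<k}"
    then have "\<beta> j \<le> m" "c j - 1 \<le> 0" using sorted[of j "k-1"] c1[of j] k unfolding m_def by auto
    then show "m * (c j - 1) \<le> \<beta> j * (c j - 1)" by (simp add: mult_right_mono_neg)
  next
    fix j assume "j \<in> {k..<p}"
    then have "m \<le> \<beta> j" "0 \<le> c j" using sorted[of "k-1" j] c0[of j] k unfolding m_def by auto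
    then show "m * c j \<le> \<beta> j * c j" by (simp add: mult_right_mono)
  qed
  also have "(\<Sum>j<k. m * (c j - 1)) + (\<Sum>j\<in>{k..<p}. m * c j) = m * ((\<Sum>j<p. c j) - k)"
    unfolding split by (simp add: sum.union_disjoint disj algebra_simps sum_subtractf sum_distrib_left)
  also have "\<dots> = 0" using csum by simp
  finally show ?thesis by simp
qed



lemma image_mset_sum_single: "finite A \<Longrightarrow> image_mset l (mset_set A) = (\<Sum>i\<in>A. {# l i #})"
  by (induction A rule: finite_induct) auto

lemma E_ineq:
  fixes f :: "'x::finite \<Rightarrow> real^'n" and u :: "nat \<Rightarrow> real^'n"
  assumes k: "1 \<le> k" "k \<le> CARD('n)"
    and u: "\<forall>i<CARD('n). \<forall>j<CARD('n). u i \<bullet> u j = (if i = j then 1 else 0)"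
  shows "phiE f k \<xi> \<le> (\<Sum>x\<in>UNIV. HE f u k x * \<xi> x)"
proof -
  define A where "A = Minf f \<xi>"
  have sym: "transpose A = A" by (simp add: A_def Minf_sym)
  obtain v l where v: "onb v" and eig: "\<And>i. A *v v i = l i *\<^sub>R v i"
    using eig_decomp[OF sym] by blast
  define p where "p = CARD('n)"
  have cp: "charpoly A = (\<Prod>i\<in>UNIV. [:- l i, 1:])" by (rule onb_charpoly[OF v eig])
  have pr: "proots (charpoly A) = (\<Sum>i\<in>UNIV. {# l i #})"
    unfolding cp by (subst proots_prod) (auto simp: proots_linear_factor)
  obtain g where g: "bij_betw g {0..<p} (UNIV::'n set)"
    using ex_bij_betw_nat_finite[of "UNIV::'n set"] p_def by auto
  define ys where "ys = map (l \<circ> g) [0..<p]"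
  have "mset ys = image_mset l (image_mset g (mset_set {0..<p}))"
    unfolding ys_def by (simp add: mset_upt multiset.map_comp)
  also have "image_mset g (mset_set {0..<p}) = mset_set UNIV"
    using g by (simp add: image_mset_mset_set bij_betw_def)
  also have "image_mset l (mset_set UNIV) = (\<Sum>i\<in>UNIV. {# l i #})"
    by (simp add: image_mset_sum_single)
  finally have ys_m: "mset ys = proots (charpoly A)" using pr by simp
  define L where "L = eigenvalues_sorted A"
  have L: "L = sort ys" unfolding L_def eigenvalues_sorted_def ys_m[symmetric]
    by (simp add: sorted_list_of_multiset_mset)
  have lenL: "length L = p" "length ys = p" by (simp_all add: L ys_def)
  have "mset L = mset ys" by (simp add: L)
  then obtain \<pi> where pi: "bij_betw \<pi> {..<p} {..<p}" "\<forall>i<p. L!i = ys!(\<pi> i)"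
    using permutation_Ex_bij[of L ys] lenL by auto
  define h where "h = g \<circ> \<pi>"
  have h: "bij_betw h {..<p} UNIV" unfolding h_def
    using bij_betw_trans[OF pi(1)] g by (simp add: atLeast0LessThan)
  have beta: "\<forall>j<p. L!j = l (h j)"
  proof (intro allI impI)
    fix j assume "j < p"
    then have "\<pi> j < p" using pi(1) by (auto simp: bij_betw_def)
    then show "L!j = l (h j)" using pi(2) \<open>j < p\<close> by (simp add: ys_def h_def)
  qed
  define w where "w j = v (h j)" for j
  have hinj: "\<And>i j. i < p \<Longrightarrow> j < p \<Longrightarrow> h i = h j \<longleftrightarrow> i = j"
    using h by (auto simp: bij_betw_def inj_on_def)
  have worth: "\<forall>i<p. \<forall>j<p. w i \<bullet> w j = (if i = j then 1 else 0)"
    using v hinj unfolding onb_def w_def by auto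
  have reidx: "(\<Sum>i\<in>UNIV. F i) = (\<Sum>j<p. F (h j))" for F :: "'n \<Rightarrow> real"
    using sum.reindex_bij_betw[OF h, of F] by simp
  have quad: "y \<bullet> (A *v y) = (\<Sum>j<p. L!j * (w j \<bullet> y)^2)" for y
    using onb_quad[OF v eig, of y] reidx[of "\<lambda>i. l i * (v i \<bullet> y)^2"] beta
    by (simp add: w_def)
  have nrm: "y \<bullet> y = (\<Sum>j<p. (w j \<bullet> y)^2)" for y
    using onb_inner[OF v, of y y] reidx[of "\<lambda>i. (v i \<bullet> y) * (v i \<bullet> y)"]
    by (simp add: w_def power2_eq_square)
  have sorted: "\<And>i j. i \<le> j \<Longrightarrow> j < p \<Longrightarrow> L!i \<le> L!j"
    using sorted_nth_mono[of L] lenL by (simp add: L)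
  have phi: "phiE f k \<xi> = (\<Sum>j<k. L!j)"
  proof -
    have "phiE f k \<xi> = sum_list (take k L)" by (simp add: phiE_def A_def L_def)
    also have "\<dots> = (\<Sum>j\<in>{0..<k}. take k L ! j)"
      using k lenL p_def by (simp add: sum_list_sum_nth min_def)
    also have "\<dots> = (\<Sum>j<k. L!j)" by (simp add: atLeast0LessThan)
    finally show ?thesis .
  qed
  have uk: "\<forall>i<k. \<forall>j<k. u i \<bullet> u j = (if i = j then 1 else 0)" using u k by auto
  define c where "c j = (\<Sum>i<k. (u i \<bullet> w j)^2)" for j
  have "(\<Sum>x\<in>UNIV. HE f u k x * \<xi> x) = (\<Sum>i<k. u i \<bullet> (A *v u i))"
    by (simp add: HE_sum[OF uk] A_def)
  also have "\<dots> = (\<Sum>i<k. \<Sum>j<p. L!j * (w j \<bullet> u i)^2)" by (simp add: quad)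
  also have "\<dots> = (\<Sum>j<p. L!j * c j)" unfolding c_def
    by (subst sum.swap) (simp add: sum_distrib_left inner_commute)
  finally have Hs: "(\<Sum>x\<in>UNIV. HE f u k x * \<xi> x) = (\<Sum>j<p. L!j * c j)" .
  have csum: "(\<Sum>j<p. c j) = real k"
  proof -
    have "(\<Sum>j<p. c j) = (\<Sum>i<k. \<Sum>j<p. (w j \<bullet> u i)^2)" unfolding c_def
      by (subst sum.swap) (simp add: inner_commute)
    also have "\<dots> = (\<Sum>i<k. u i \<bullet> u i)" by (simp add: nrm)
    also have "\<dots> = (\<Sum>i<k. 1)" using uk by simp
    finally show ?thesis by simp
  qed
  have c1: "c j \<le> 1" if "j < p" for j
    using bessel[OF uk, of "w j"] worth that unfolding c_def by simp
  have c0: "0 \<le> c j" for j unfolding c_def by (simp add: sum_nonneg)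
  show ?thesis unfolding phi Hs
    by (rule kyfan_core[OF sorted c0 c1 csum k(1)]) (use k p_def in auto)
qed



lemma matrix_inv_both:
  assumes "invertible (A::real^'n^'n)"
  shows "A ** matrix_inv A = mat 1" "matrix_inv A ** A = mat 1"
proof -
  have "\<exists>A'. A ** A' = mat 1 \<and> A' ** A = mat 1" using assms unfolding invertible_def .
  then have "A ** matrix_inv A = mat 1 \<and> matrix_inv A ** A = mat 1"
    unfolding matrix_inv_def by (rule someI_ex)
  then show "A ** matrix_inv A = mat 1" "matrix_inv A ** A = mat 1" by auto
qed

lemma inv_mv1: "invertible (A::real^'n^'n) \<Longrightarrow> matrix_inv A *v (A *v y) = y"
  by (simp add: matrix_vector_mul_assoc matrix_inv_both)

lemma inv_mv2: "invertible (A::real^'n^'n) \<Longrightarrow> A *v (matrix_inv A *v y) = y"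
  by (simp add: matrix_vector_mul_assoc matrix_inv_both)

lemma amgm:
  fixes c :: "'n::finite \<Rightarrow> real"
  assumes c0: "\<And>i. c i \<ge> 0"
  shows "(\<Prod>i\<in>UNIV. c i) powr (1 / real CARD('n)) \<le> (\<Sum>i\<in>UNIV. c i) / real CARD('n)"
proof -
  define n where "n = real CARD('n)"
  have npos: "n > 0" unfolding n_def by simp
  define m where "m = (\<Sum>i\<in>UNIV. c i) / n"
  have m0: "m \<ge> 0" unfolding m_def using c0 npos by (simp add: sum_nonneg)
  have pm: "(\<Prod>i\<in>UNIV. c i) \<le> m ^ CARD('n)"
  proof (cases "\<exists>i. c i = 0")
    case True
    then have z: "(\<Prod>i\<in>UNIV. c i) = 0" by (metis UNIV_I finite prod_zero_iff)
    show ?thesis unfolding z using m0 by (rule zero_le_power)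
  next
    case False
    then have cpos: "\<And>i. c i > 0" using c0 by (metis less_eq_real_def)
    then have mpos: "m > 0" unfolding m_def using npos by (simp add: sum_pos)
    have "ln (\<Prod>i\<in>UNIV. c i / m) = (\<Sum>i\<in>UNIV. ln (c i / m))"
      using cpos mpos by (intro ln_prod) (auto simp: less_le)
    also have "\<dots> \<le> (\<Sum>i\<in>UNIV. c i / m - 1)"
      using cpos mpos by (intro sum_mono ln_le_minus_one) auto
    also have "\<dots> = (\<Sum>i\<in>UNIV. c i) / m - n"
      by (simp add: sum_subtractf sum_divide_distrib n_def)
    also have "\<dots> = 0" unfolding m_def using npos mpos m_def by (simp add: field_simps)
    finally have "ln (\<Prod>i\<in>UNIV. c i / m) \<le> 0" .
    moreover have "(\<Prod>i\<in>UNIV. c i / m) > 0" using cpos mpos by (simp add: prod_pos)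
    ultimately have "(\<Prod>i\<in>UNIV. c i / m) \<le> 1" by simp
    then have "(\<Prod>i\<in>UNIV. c i) / m ^ CARD('n) \<le> 1" by (simp add: prod_dividef)
    then show ?thesis using mpos by (simp add: divide_le_eq)
  qed
  have "(\<Prod>i\<in>UNIV. c i) powr (1 / n) \<le> (m ^ CARD('n)) powr (1 / n)"
    using pm c0 npos by (intro powr_mono2) (auto simp: prod_nonneg)
  also have "\<dots> = m"
  proof (cases "m = 0")
    case True then show ?thesis by simp
  next
    case False
    then have "m > 0" using m0 by simp
    then show ?thesis using npos by (simp add: powr_realpow[symmetric] powr_powr n_def)
  qed
  finally show ?thesis unfolding m_def n_def .
qed



lemma onb_unit: "onb v \<Longrightarrow> v i \<bullet> v i = 1" by (simp add: onb_def)
lemma onb_nz: "onb v \<Longrightarrow> v i \<noteq> 0" using onb_unit[of v i] by auto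

lemma eig_val:
  assumes "onb v" "\<And>i. M *v v i = l i *\<^sub>R v i"
  shows "l i = v i \<bullet> (M *v v i)"
  using assms onb_unit[OF assms(1), of i] by simp

lemma inv_eig:
  assumes "invertible (M::real^'n^'n)" "M *v w = a *\<^sub>R w" "a \<noteq> 0"
  shows "matrix_inv M *v w = (1 / a) *\<^sub>R w"
proof -
  have "w = matrix_inv M *v (M *v w)" using inv_mv1[OF assms(1)] by simp
  also have "\<dots> = a *\<^sub>R (matrix_inv M *v w)" by (simp add: assms(2) matrix_vector_mult_scaleR)
  finally have "(1/a) *\<^sub>R w = (1/a) *\<^sub>R (a *\<^sub>R (matrix_inv M *v w))" by simp
  then show ?thesis using assms(3) by simp
qed

lemma inv_pd:
  assumes "design \<mu>" "invertible (Minf f \<mu>)" "y \<noteq> 0"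
  shows "y \<bullet> (matrix_inv (Minf f \<mu>) *v y) > 0"
proof -
  define A where "A = Minf f \<mu>"
  define z where "z = matrix_inv A *v y"
  have yz: "y = A *v z" unfolding z_def A_def using inv_mv2[OF assms(2)] by simp
  then have "z \<noteq> 0" using assms(3) by auto
  then have "z \<bullet> (A *v z) > 0" unfolding A_def by (rule Minf_pd[OF assms(1,2)])
  moreover have "y \<bullet> z = z \<bullet> (A *v z)" using yz by (simp add: inner_commute)
  ultimately show ?thesis unfolding z_def A_def by simp
qed

lemma A_ineq:
  fixes f :: "'x::finite \<Rightarrow> real^'n"
  assumes xi: "design \<xi>" "invertible (Minf f \<xi>)" and mu: "design \<mu>" "invertible (Minf f \<mu>)"
  shows "phiA f \<xi> \<le> (\<Sum>x\<in>UNIV. HA f \<mu> x * \<xi> x)"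
proof -
  define B where "B = Minf f \<xi>"
  define P where "P = matrix_inv (Minf f \<mu>)"
  have symB: "transpose B = B" by (simp add: B_def Minf_sym)
  obtain v b where v: "onb v" and eig: "\<And>i. B *v v i = b i *\<^sub>R v i"
    using eig_decomp[OF symB] by blast
  have bpos: "b i > 0" for i
    using eig_val[OF v eig, of i] Minf_pd[OF xi onb_nz[OF v]] by (simp add: B_def)
  have invB: "matrix_inv B *v v i = (1 / b i) *\<^sub>R v i" for i
    using inv_eig[OF xi(2)[folded B_def] eig] bpos[of i] by simp
  define T where "T = trace (matrix_inv B)"
  have T: "T = (\<Sum>i\<in>UNIV. 1 / b i)" unfolding T_def onb_trace[OF v]
    by (simp add: invB onb_unit[OF v])
  have Tpos: "T > 0" unfolding T using bpos by (simp add: sum_pos)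
  define a where "a i = v i \<bullet> (P *v v i)" for i
  have apos: "a i > 0" for i unfolding a_def P_def using inv_pd[OF mu onb_nz[OF v]] by simp
  define tP where "tP = trace P"
  have tP: "tP = (\<Sum>i\<in>UNIV. a i)" unfolding tP_def a_def by (rule onb_trace[OF v])
  have tPpos: "tP > 0" unfolding tP using apos by (simp add: sum_pos)
  define q where "q j = transpose P *v v j" for j
  define S where "S = (\<Sum>x\<in>UNIV. \<xi> x * (norm (P *v f x))^2)"
  have "S = (\<Sum>x\<in>UNIV. \<xi> x * (\<Sum>j\<in>UNIV. (f x \<bullet> q j)^2))"
    unfolding S_def onb_norm2[OF v] q_def
    by (simp add: inner_commute[of "v _"] inner_mv)
  also have "\<dots> = (\<Sum>j\<in>UNIV. \<Sum>x\<in>UNIV. \<xi> x * (f x \<bullet> q j)^2)"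
    by (simp add: sum_distrib_left) (rule sum.swap)
  also have "\<dots> = (\<Sum>j\<in>UNIV. q j \<bullet> (B *v q j))" by (simp add: Minf_quad B_def)
  also have "\<dots> = (\<Sum>j\<in>UNIV. \<Sum>l\<in>UNIV. b l * (v l \<bullet> q j)^2)" by (simp add: onb_quad[OF v eig])
  finally have S1: "S = (\<Sum>j\<in>UNIV. \<Sum>l\<in>UNIV. b l * (v l \<bullet> q j)^2)" .
  have vq: "v j \<bullet> q j = a j" for j unfolding q_def a_def
    by (metis inner_mv inner_commute)
  have S2: "(\<Sum>j\<in>UNIV. b j * (a j)^2) \<le> S" unfolding S1
  proof (rule sum_mono)
    fix j
    have "b j * (v j \<bullet> q j)^2 \<le> (\<Sum>l\<in>UNIV. b l * (v l \<bullet> q j)^2)"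
      by (rule member_le_sum) (auto intro: mult_nonneg_nonneg less_imp_le[OF bpos])
    then show "b j * (a j)^2 \<le> (\<Sum>l\<in>UNIV. b l * (v l \<bullet> q j)^2)" by (simp add: vq)
  qed
  have CS: "tP^2 \<le> (\<Sum>j\<in>UNIV. b j * (a j)^2) * T"
  proof -
    have "tP = (\<Sum>j\<in>UNIV. (sqrt (b j) * a j) * (1 / sqrt (b j)))"
      unfolding tP using bpos by (intro sum.cong) (auto simp: field_simps less_imp_neq[symmetric])
    then have "tP^2 \<le> (\<Sum>j\<in>UNIV. (sqrt (b j) * a j)^2) * (\<Sum>j\<in>UNIV. (1 / sqrt (b j))^2)"
      using Cauchy_Schwarz_ineq_sum by metis
    also have "\<dots> = (\<Sum>j\<in>UNIV. b j * (a j)^2) * T"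
      unfolding T using bpos by (simp add: power_mult_distrib power_divide less_imp_le)
    finally show ?thesis .
  qed
  have HA: "(\<Sum>x\<in>UNIV. HA f \<mu> x * \<xi> x) = S / tP^2"
    unfolding HA_def S_def tP_def P_def by (simp add: sum_divide_distrib mult_ac)
  have "tP^2 \<le> S * T" using CS S2 Tpos by (meson mult_right_mono less_imp_le order_trans)
  then have "1 / T \<le> S / tP^2" using Tpos tPpos by (simp add: field_simps)
  then show ?thesis unfolding HA phiA_def T_def[symmetric] B_def[symmetric] .
qed



lemma ent_lemma:
  "((\<chi> i. w i) ** (M::real^'n^'n) ** transpose (\<chi> i. w i)) $ i $ j = w i \<bullet> (M *v w j)"
  by (simp add: matrix_matrix_mult_def transpose_def inner_vec_def matrix_vector_mult_def
        sum_distrib_left sum_distrib_right mult_ac)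
      (rule sum.swap)

lemma D_ineq:
  fixes f :: "'x::finite \<Rightarrow> real^'n"
  assumes xi: "design \<xi>" "invertible (Minf f \<xi>)" and mu: "design \<mu>" "invertible (Minf f \<mu>)"
  shows "phiD f \<xi> \<le> (\<Sum>x\<in>UNIV. HD f \<mu> x * \<xi> x)"
proof -
  define B where "B = Minf f \<xi>"
  define A where "A = Minf f \<mu>"
  define P where "P = matrix_inv A"
  have symA: "transpose A = A" by (simp add: A_def Minf_sym)
  obtain v a where v: "onb v" and eig: "\<And>i. A *v v i = a i *\<^sub>R v i"
    using eig_decomp[OF symA] by blast
  have apos: "a i > 0" for i
    using eig_val[OF v eig, of i] Minf_pd[OF mu onb_nz[OF v]] by (simp add: A_def)
  have Pv: "P *v v i = (1 / a i) *\<^sub>R v i" for i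
    unfolding P_def using inv_eig[OF mu(2)[folded A_def] eig] apos[of i] by simp
  define R where "R = (\<Sum>j\<in>UNIV. (v j \<bullet> (B *v v j)) / a j)"
  have fPf: "y \<bullet> (P *v y) = (\<Sum>j\<in>UNIV. (v j \<bullet> y)^2 / a j)" for y
    by (subst onb_mv[OF v]) (simp add: Pv inner_sum_right power2_eq_square inner_commute)
  have sumR: "(\<Sum>x\<in>UNIV. \<xi> x * (f x \<bullet> (P *v f x))) = R"
  proof -
    have "(\<Sum>x\<in>UNIV. \<xi> x * (f x \<bullet> (P *v f x))) = (\<Sum>x\<in>UNIV. \<Sum>j\<in>UNIV. \<xi> x * (f x \<bullet> v j)^2 / a j)"
      by (simp add: fPf sum_distrib_left inner_commute)
    also have "\<dots> = (\<Sum>j\<in>UNIV. \<Sum>x\<in>UNIV. \<xi> x * (f x \<bullet> v j)^2 / a j)" by (rule sum.swap)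
    also have "\<dots> = R" unfolding R_def B_def Minf_quad by (simp add: sum_divide_distrib)
    finally show ?thesis .
  qed
  define p where "p = real CARD('n)"
  have HDs: "(\<Sum>x\<in>UNIV. HD f \<mu> x * \<xi> x) = det A powr (1 / p) / p * R"
    unfolding HD_def A_def[symmetric] P_def[symmetric] p_def[symmetric] sumR[symmetric]
    by (simp add: sum_distrib_left mult_ac)
  have detA: "det A = (\<Prod>i\<in>UNIV. a i)" by (rule onb_det[OF v eig])
  have detApos: "det A > 0" unfolding detA using apos by (simp add: prod_pos)
  define w where "w j = (1 / sqrt (a j)) *\<^sub>R v j" for j
  define W :: "real^'n^'n" where "W = (\<chi> j. w j)"
  define C where "C = W ** B ** transpose W"
  have Cent: "C $ i $ j = w i \<bullet> (B *v w j)" for i j unfolding C_def W_def by (rule ent_lemma)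
  have ww: "w i \<bullet> w j = (if i = j then 1 / a i else 0)" for i j
    using v apos[of i] unfolding w_def onb_def
    by (auto simp: power2_eq_square[symmetric] real_sqrt_pow2 less_imp_le)
  have WW: "det W * det (transpose W) = (\<Prod>i\<in>UNIV. 1 / a i)"
  proof -
    have "det W * det (transpose W) = det (W ** mat 1 ** transpose W)" by (simp add: det_mul)
    also have "\<dots> = (\<Prod>i\<in>UNIV. (W ** mat 1 ** transpose W) $ i $ i)"
      by (rule det_diagonal) (simp only: W_def ent_lemma matrix_vector_mul_lid ww, simp)
    also have "\<dots> = (\<Prod>i\<in>UNIV. 1 / a i)" by (simp only: W_def ent_lemma matrix_vector_mul_lid ww, simp)
    finally show ?thesis .
  qed
  have detC: "det B = det A * det C"
  proof -
    have "det C = det B * (det W * det (transpose W))" unfolding C_def by (simp add: det_mul mult_ac)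
    then have "det A * det C = det B * ((\<Prod>i\<in>UNIV. a i) * (\<Prod>i\<in>UNIV. 1 / a i))"
      unfolding WW detA by (simp add: mult_ac)
    also have "(\<Prod>i\<in>UNIV. a i) * (\<Prod>i\<in>UNIV. 1 / a i) = 1"
      using apos by (simp add: prod.distrib[symmetric] less_imp_neq[symmetric])
    finally show ?thesis by simp
  qed
  have symC: "transpose C = C"
    by (simp add: vec_eq_iff transpose_def Cent B_def) (metis sym_inner[OF Minf_sym] inner_commute)
  obtain z c where z: "onb z" and eigC: "\<And>i. C *v z i = c i *\<^sub>R z i"
    using eig_decomp[OF symC] by blast
  have c0: "c i \<ge> 0" for i
  proof -
    have "C *v z i = W *v (B *v (transpose W *v z i))"
      unfolding C_def by (metis matrix_vector_mul_assoc)
    then have "z i \<bullet> (C *v z i) = (transpose W *v z i) \<bullet> (B *v (transpose W *v z i))"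
      using inner_mv[of W "B *v (transpose W *v z i)" "z i"] by (metis inner_commute)
    also have "\<dots> \<ge> 0" unfolding B_def Minf_quad using xi(1)
      by (intro sum_nonneg) (auto simp: design_def)
    finally show ?thesis using eig_val[OF z eigC, of i] by simp
  qed
  have detCc: "det C = (\<Prod>i\<in>UNIV. c i)" by (rule onb_det[OF z eigC])
  have trC: "(\<Sum>i\<in>UNIV. c i) = R"
  proof -
    have "(\<Sum>i\<in>UNIV. c i) = trace C" using onb_trace[OF z, of C] by (simp add: eig_val[OF z eigC])
    also have "\<dots> = (\<Sum>j\<in>UNIV. w j \<bullet> (B *v w j))" by (simp add: trace_def Cent)
    also have "\<dots> = R" unfolding R_def w_def using apos
      by (intro sum.cong) (auto simp: matrix_vector_mult_scaleR power2_eq_square[symmetric]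
          real_sqrt_pow2 less_imp_le divide_inverse power_inverse)
    finally show ?thesis .
  qed
  have "phiD f \<xi> = (det A * det C) powr (1 / p)" unfolding phiD_def B_def[symmetric] detC p_def ..
  also have "\<dots> = det A powr (1 / p) * det C powr (1 / p)"
    using detApos c0 by (intro powr_mult; auto simp: detCc intro: prod_nonneg)
  also have "\<dots> \<le> det A powr (1 / p) * (R / p)"
    unfolding detCc p_def trC[symmetric] by (intro mult_left_mono amgm c0 powr_nonneg_iff[THEN iffD2]) simp
  also have "\<dots> = (\<Sum>x\<in>UNIV. HD f \<mu> x * \<xi> x)" unfolding HDs by simp
  finally show ?thesis .
qed



theorem mainTheorem4:
  fixes f :: "'x::finite \<Rightarrow> real^'p::finite"
    and H :: "('x \<Rightarrow> real) \<Rightarrow> 'x \<Rightarrow> real"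
    and Xs :: "('x \<Rightarrow> real) set"
    and phi :: "('x \<Rightarrow> real) \<Rightarrow> real"
    and Xi' :: "('x \<Rightarrow> real) set"
    and \<xi>' :: "'x \<Rightarrow> real" and t' :: real
  assumes choice:
    "(H = HD f \<and> Xs = DesignsPlus f \<and> phi = phiD f)
     \<or> (H = HA f \<and> Xs = DesignsPlus f \<and> phi = phiA f)
     \<or> (\<exists>k U. 1 \<le> k \<and> k \<le> CARD('p) \<and>
          (\<forall>\<mu>\<in>Xi'. ordered_eigenbasis (Minf f \<mu>) (U \<mu>)) \<and>
          H = (\<lambda>\<mu> x. HE f (U \<mu>) k x) \<and> Xs = Designs \<and> phi = phiE f k)"
    and "finite Xi'" and "Xi' \<noteq> {}" and "Xi' \<subseteq> Xs"
    and "lp_optimal H Xi' \<xi>' t'"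
    and "\<xi>' \<in> Xs"
  shows "bdd_above (phi ` Xs) \<and> phi \<xi>' \<le> (SUP \<xi>\<in>Xs. phi \<xi>) \<and> (SUP \<xi>\<in>Xs. phi \<xi>) \<le> t'"
proof -
  have key: "phi \<xi> \<le> (\<Sum>x\<in>UNIV. H \<mu> x * \<xi> x) \<and> design \<xi>" if "\<xi> \<in> Xs" "\<mu> \<in> Xi'" for \<xi> \<mu>
  proof -
    have mu: "\<mu> \<in> Xs" using that(2) assms(4) by auto
    consider (D) "H = HD f \<and> Xs = DesignsPlus f \<and> phi = phiD f"
      | (A) "H = HA f \<and> Xs = DesignsPlus f \<and> phi = phiA f"
      | (E) "\<exists>k U. 1 \<le> k \<and> k \<le> CARD('p) \<and>
          (\<forall>\<mu>\<in>Xi'. ordered_eigenbasis (Minf f \<mu>) (U \<mu>)) \<and>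
          H = (\<lambda>\<mu> x. HE f (U \<mu>) k x) \<and> Xs = Designs \<and> phi = phiE f k"
      using choice by blast
    then show ?thesis
    proof cases
      case D
      then show ?thesis using that(1) mu D_ineq[of \<xi> f \<mu>] by (auto simp: DesignsPlus_def)
    next
      case A
      then show ?thesis using that(1) mu A_ineq[of \<xi> f \<mu>] by (auto simp: DesignsPlus_def)
    next
      case E
      then obtain k U where kU: "1 \<le> k" "k \<le> CARD('p)"
        "\<forall>\<mu>\<in>Xi'. ordered_eigenbasis (Minf f \<mu>) (U \<mu>)"
        "H = (\<lambda>\<mu> x. HE f (U \<mu>) k x)" "Xs = Designs" "phi = phiE f k" by blast
      have "\<forall>i<CARD('p). \<forall>j<CARD('p). U \<mu> i \<bullet> U \<mu> j = (if i = j then 1 else 0)"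
        using kU(3) that(2) unfolding ordered_eigenbasis_def by blast
      from E_ineq[OF kU(1,2) this, of f \<xi>] show ?thesis
        using kU(4-6) that(1) by (simp add: Designs_def)
    qed
  qed
  have le: "phi \<xi> \<le> t'" if "\<xi> \<in> Xs" for \<xi>
  proof -
    have "lp_feasible H Xi' \<xi> (phi \<xi>)"
      unfolding lp_feasible_def using key[OF that] assms(3) by auto
    then show ?thesis using assms(5) unfolding lp_optimal_def by blast
  qed
  have bdd: "bdd_above (phi ` Xs)" using le by (intro bdd_aboveI2) auto
  moreover have "phi \<xi>' \<le> (SUP \<xi>\<in>Xs. phi \<xi>)" using bdd assms(6) by (rule cSUP_upper2) simp
  moreover have "(SUP \<xi>\<in>Xs. phi \<xi>) \<le> t'" using assms(6) le by (intro cSUP_least) auto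
  ultimately show ?thesis by blast
qed

end
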